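(* Assume conditions (G) and (B) hold, let $\alpha\in(0,1)$ satisfy $r_n<\alpha$ and $\alpha+2r_n<1$, let $\beta\in(0,1)$, and let $r_n'=2r_n+\delta_n$. Let $\widehat\pi_{\mathrm{PoLeCe}}$ be any random element of $\Pi$ with $\widehat\pi_{\mathrm{PoLeCe}}\in\arg\max_{\pi\in\Pi}LV_{1-\alpha}(\pi)$, and set $LV_{1-\alpha,\Pi}=\max_{\pi\in\Pi}LV_{1-\alpha}(\pi)$. Then: (i) with probability at least $1-\alpha-r_n'$, $$V_{\max}\ge V(\widehat\pi_{\mathrm{PoLeCe}})\ge LV_{1-\alpha,\Pi};$$ (ii) with probability at least $1-\alpha-\beta-r_n-r_n'$, $$V_{\max}-V(\widehat\pi_{\mathrm{PoLeCe}})\le V_{\max}-LV_{1-\alpha,\Pi}\le\frac{\underline\sigma_{\Pi_0}}{\sqrt n}\bigl\{q_{1-\beta,\Pi_0}+q_{1-\alpha+r_n,\Pi}\bigr\}.$$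
   Context: Setting. $\Pi$ is a finite nonempty set of policies, $n$ a positive integer. $V:\Pi\to\mathbb R$ is a deterministic welfare function; on a probability space (the data), $(\widehat V(\pi))_{\pi\in\Pi}$ are real random variables and $(\widehat s(\pi))_{\pi\in\Pi}$ strictly positive random variables. $\widehat Z_\pi=(\widehat V(\pi)-V(\pi))/\widehat s(\pi)$. $(Z_\pi)_{\pi\in\Pi}$ is a centered Gaussian vector with $\mathrm{Var}(Z_\pi)=1$ for all $\pi$. $\mathcal A$ is the collection of rectangles in $\mathbb R^\Pi$ (products of possibly unbounded intervals). Condition (G): there is $r_n\ge0$ with $|\Pr((\widehat Z_\pi)_\pi\in A)-\Pr((Z_\pi)_\pi\in A)|\le r_n$ for all $A\in\mathcal A$. Bootstrap: $\widehat C$ is a data-dependent positive semidefinite $|\Pi|\times|\Pi|$ matrix; conditionally on the data, $(\widehat Z^*_\pi)_{\pi\in\Pi}\sim N(0,\widehat C)$, and $\Pr^*$ denotes this conditional probability. Condition (B): there is $\delta_n\in[0,1]$ such that, with probability at least $1-\delta_n$ over the data, $|\Pr^*((\widehat Z^*_\pi)_\pi\in A)-\Pr((Z_\pi)_\pi\in A)|\le r_n$ for all $A\in\mathcal A$. Quantiles: for $\tau\in(0,1)$ the $\tau$-quantile of $X$ under $P$ is $\inf\{x:P(X\le x)\ge\tau\}$. For nonempty $K\subseteq\Pi$, $q_{\tau,K}$ is the $\tau$-quantile of $\max_{\pi\in K}Z_\pi$ under $\Pr$, and $\widehat q_{\tau,\Pi}$ is the $\tau$-quantile of $\max_{\pi\in\Pi}\widehat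 Z^*_\pi$ under $\Pr^*$. Further notation: $LV_{1-\alpha}(\pi)=\widehat V(\pi)-\widehat q_{1-\alpha,\Pi}\widehat s(\pi)$; $V_{\max}=\max_{\pi\in\Pi}V(\pi)$; $\Pi_0=\{\pi\in\Pi:V(\pi)=V_{\max}\}$; $\underline\sigma_{\Pi_0}=\sqrt n\min_{\pi\in\Pi_0}\widehat s(\pi)$. *)

theory Defs
  imports "HOL-Probability.Probability"
begin

text \<open>Rectangles in R^Pi: products over Pi of (possibly unbounded, possibly degenerate)
  real intervals; a rectangle is given by a family I of interval sets.\<close>
definition rectangle_family :: "'p set \<Rightarrow> ('p \<Rightarrow> real set) \<Rightarrow> bool" where
  "rectangle_family P I \<longleftrightarrow> (\<forall>p\<in>P. is_interval (I p))"

definition prob_rect :: "'b measure \<Rightarrow> 'p set \<Rightarrow> ('b \<Rightarrow> 'p \<Rightarrow> real) \<Rightarrow> ('p \<Rightarrow> real set) \<Rightarrow> real" where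
  "prob_rect N P X I = measure N {x \<in> space N. \<forall>p\<in>P. X x p \<in> I p}"

definition centered_gaussian_vector ::
  "'b measure \<Rightarrow> 'p set \<Rightarrow> ('b \<Rightarrow> 'p \<Rightarrow> real) \<Rightarrow> ('p \<Rightarrow> 'p \<Rightarrow> real) \<Rightarrow> bool" where
  "centered_gaussian_vector N P X C \<longleftrightarrow>
     prob_space N \<and>
     (\<forall>p\<in>P. (\<lambda>x. X x p) \<in> borel_measurable N) \<and>
     (\<forall>p\<in>P. \<forall>q\<in>P. C p q = C q p) \<and>
     (\<forall>c::'p \<Rightarrow> real.
        let s2 = (\<Sum>p\<in>P. \<Sum>q\<in>P. c p * c q * C p q)
        in 0 \<le> s2 \<and>
           distr N borel (\<lambda>x. \<Sum>p\<in>P. c p * X x p) =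
             (if s2 = 0 then return borel 0
              else density lborel (normal_density 0 (sqrt s2))))"

definition quantile :: "'b measure \<Rightarrow> ('b \<Rightarrow> real) \<Rightarrow> real \<Rightarrow> real" where
  "quantile N X tau = Inf {x::real. tau \<le> measure N {y \<in> space N. X y \<le> x}}"

end

theory Submission
  imports Defs "HOL-Real_Asymp.Real_Asymp"
begin


lemma std_normal_prob: "prob_space std_normal_distribution"
  using real_dist_normal_dist real_distribution_def by blast

lemma cos_sum_gauss:
  fixes K :: "'p set" and v :: "'p \<Rightarrow> real"
  assumes K: "finite K"
  shows "(\<integral>T. cos (\<Sum>p\<in>K. T p * v p) \<partial>(PiM K (\<lambda>_. std_normal_distribution))) = (\<Prod>p\<in>K. exp (- (v p)\<^sup>2 / 2))"
proof -
  interpret S: prob_space std_normal_distribution by (rule std_normal_prob)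
  interpret product_sigma_finite "\<lambda>_::'p. std_normal_distribution"
    by (simp add: product_sigma_finite_def S.sigma_finite_measure_axioms)
  interpret P: prob_space "PiM K (\<lambda>_. std_normal_distribution)"
    by (simp add: S.prob_space_axioms prob_space_PiM)
  have int: "integrable std_normal_distribution (\<lambda>t. iexp (v p * t))" for p
    by (rule S.integrable_iexp) auto
  have "(\<integral>T. (\<Prod>p\<in>K. iexp (v p * T p)) \<partial>(PiM K (\<lambda>_. std_normal_distribution)))
      = (\<Prod>p\<in>K. \<integral>t. iexp (v p * t) \<partial>std_normal_distribution)"
    using product_integral_prod[OF K, of "\<lambda>p t. iexp (v p * t)"] int by simp
  also have "\<dots> = (\<Prod>p\<in>K. complex_of_real (exp (- (v p)\<^sup>2 / 2)))"
  proof (rule prod.cong)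
    fix p assume "p \<in> K"
    have "(\<integral>t. iexp (v p * t) \<partial>std_normal_distribution) = char std_normal_distribution (v p)"
      by (simp add: char_def)
    then show "(\<integral>t. iexp (v p * t) \<partial>std_normal_distribution) = complex_of_real (exp (- (v p)\<^sup>2 / 2))"
      by (simp add: char_std_normal_distribution)
  qed simp
  finally have 1: "(\<integral>T. (\<Prod>p\<in>K. iexp (v p * T p)) \<partial>(PiM K (\<lambda>_. std_normal_distribution)))
      = complex_of_real (\<Prod>p\<in>K. exp (- (v p)\<^sup>2 / 2))" by simp
  have 2: "(\<Prod>p\<in>K. iexp (v p * T p)) = iexp (\<Sum>p\<in>K. T p * v p)" for T
    using K by (subst exp_sum[symmetric]) (auto simp add: sum_distrib_left mult_ac)
  have intP: "integrable (PiM K (\<lambda>_. std_normal_distribution)) (\<lambda>T. iexp (\<Sum>p\<in>K. T p * v p))"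
    by (rule P.integrable_iexp) auto
  have "(\<integral>T. cos (\<Sum>p\<in>K. T p * v p) \<partial>(PiM K (\<lambda>_. std_normal_distribution)))
      = (\<integral>T. Re (iexp (\<Sum>p\<in>K. T p * v p)) \<partial>(PiM K (\<lambda>_. std_normal_distribution)))"
    by (simp add: Re_exp)
  also have "\<dots> = Re (\<integral>T. iexp (\<Sum>p\<in>K. T p * v p) \<partial>(PiM K (\<lambda>_. std_normal_distribution)))"
    using intP by simp
  also have "\<dots> = Re (complex_of_real (\<Prod>p\<in>K. exp (- (v p)\<^sup>2 / 2)))"
    using 1 2 by (simp only:)
  also have "\<dots> = (\<Prod>p\<in>K. exp (- (v p)\<^sup>2 / 2))"
    by (simp only: Re_complex_of_real)
  finally show ?thesis .
qed



lemma (in prob_space) smooth_eq: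
  fixes K :: "'p set" and Y :: "'a \<Rightarrow> 'p \<Rightarrow> real" and a :: "'p \<Rightarrow> real"
  assumes K: "finite K" and Ym[measurable]: "\<And>p. p \<in> K \<Longrightarrow> (\<lambda>\<omega>. Y \<omega> p) \<in> borel_measurable M"
    and sinz: "\<And>t. (\<integral>\<omega>. sin (\<Sum>p\<in>K. t p * Y \<omega> p) \<partial>M) = 0"
    and \<sigma>: "0 < \<sigma>"
  shows "(\<integral>\<omega>. (\<Prod>p\<in>K. exp (- ((Y \<omega> p - a p) / \<sigma>)\<^sup>2 / 2)) \<partial>M)
       = (\<integral>T. (\<integral>\<omega>. cos (\<Sum>p\<in>K. (T p / \<sigma>) * Y \<omega> p) \<partial>M) * cos (\<Sum>p\<in>K. (T p / \<sigma>) * a p)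
            \<partial>(PiM K (\<lambda>_. std_normal_distribution)))"
proof -
  let ?Q = "PiM K (\<lambda>_. std_normal_distribution)"
  interpret S: prob_space std_normal_distribution by (rule std_normal_prob)
  interpret Q: prob_space ?Q
    by (simp add: S.prob_space_axioms prob_space_PiM)
  interpret MQ: pair_prob_space M ?Q
    by (simp add: pair_prob_space_def pair_sigma_finite_def prob_space_axioms Q.prob_space_axioms prob_space_imp_sigma_finite)
  have meas: "(\<lambda>(\<omega>, T). cos (\<Sum>p\<in>K. T p * ((Y \<omega> p - a p) / \<sigma>))) \<in> borel_measurable (M \<Otimes>\<^sub>M ?Q)"
    by measurable
  have intg: "integrable (M \<Otimes>\<^sub>M ?Q) (\<lambda>(\<omega>, T). cos (\<Sum>p\<in>K. T p * ((Y \<omega> p - a p) / \<sigma>)))"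
    by (rule MQ.integrable_const_bound[where B=1]) (auto simp: meas)
  have "(\<integral>\<omega>. (\<Prod>p\<in>K. exp (- ((Y \<omega> p - a p) / \<sigma>)\<^sup>2 / 2)) \<partial>M)
      = (\<integral>\<omega>. (\<integral>T. cos (\<Sum>p\<in>K. T p * ((Y \<omega> p - a p) / \<sigma>)) \<partial>?Q) \<partial>M)"
  proof (rule Bochner_Integration.integral_cong[OF refl])
    fix \<omega> show "(\<Prod>p\<in>K. exp (- ((Y \<omega> p - a p) / \<sigma>)\<^sup>2 / 2)) = (\<integral>T. cos (\<Sum>p\<in>K. T p * ((Y \<omega> p - a p) / \<sigma>)) \<partial>?Q)"
      by (simp only: cos_sum_gauss[OF K, of "\<lambda>p. (Y \<omega> p - a p) / \<sigma>"])
  qed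
  also have "\<dots> = (\<integral>T. (\<integral>\<omega>. cos (\<Sum>p\<in>K. T p * ((Y \<omega> p - a p) / \<sigma>)) \<partial>M) \<partial>?Q)"
    using MQ.Fubini_integral[of "\<lambda>\<omega> T. cos (\<Sum>p\<in>K. T p * ((Y \<omega> p - a p) / \<sigma>))"] intg
    by simp
  also have "\<dots> = (\<integral>T. (\<integral>\<omega>. cos (\<Sum>p\<in>K. (T p / \<sigma>) * Y \<omega> p) \<partial>M) * cos (\<Sum>p\<in>K. (T p / \<sigma>) * a p) \<partial>?Q)"
  proof (rule Bochner_Integration.integral_cong[OF refl])
    fix T
    let ?A = "\<lambda>\<omega>. (\<Sum>p\<in>K. (T p / \<sigma>) * Y \<omega> p)" and ?B = "(\<Sum>p\<in>K. (T p / \<sigma>) * a p)"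
    have e: "(\<Sum>p\<in>K. T p * ((Y \<omega> p - a p) / \<sigma>)) = ?A \<omega> - ?B" for \<omega>
      by (simp add: sum_subtractf[symmetric] field_simps diff_divide_distrib)
    have ic: "integrable M (\<lambda>\<omega>. cos (?A \<omega>))"
      by (rule integrable_const_bound[where B=1]) auto
    have isi: "integrable M (\<lambda>\<omega>. sin (?A \<omega>))"
      by (rule integrable_const_bound[where B=1]) auto
    have "(\<integral>\<omega>. cos (\<Sum>p\<in>K. T p * ((Y \<omega> p - a p) / \<sigma>)) \<partial>M)
        = (\<integral>\<omega>. cos (?A \<omega>) * cos ?B + sin (?A \<omega>) * sin ?B \<partial>M)"
      by (simp only: e cos_diff)
    also have "\<dots> = (\<integral>\<omega>. cos (?A \<omega>) \<partial>M) * cos ?B + (\<integral>\<omega>. sin (?A \<omega>) \<partial>M) * sin ?B"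
      using ic isi by simp
    also have "\<dots> = (\<integral>\<omega>. cos (?A \<omega>) \<partial>M) * cos ?B"
      using sinz[of "\<lambda>p. T p / \<sigma>"] by simp
    finally show "(\<integral>\<omega>. cos (\<Sum>p\<in>K. T p * ((Y \<omega> p - a p) / \<sigma>)) \<partial>M)
        = (\<integral>\<omega>. cos (?A \<omega>) \<partial>M) * cos ?B" .
  qed
  finally show ?thesis .
qed



lemma (in prob_space) smooth_sym:
  fixes K :: "'p set" and X :: "'a \<Rightarrow> 'p \<Rightarrow> real" and a :: "'p \<Rightarrow> real"
  assumes K: "finite K" and Xm[measurable]: "\<And>p. p \<in> K \<Longrightarrow> (\<lambda>\<omega>. X \<omega> p) \<in> borel_measurable M"
    and sinz: "\<And>t. (\<integral>\<omega>. sin (\<Sum>p\<in>K. t p * X \<omega> p) \<partial>M) = 0"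
    and \<sigma>: "0 < \<sigma>"
  shows "(\<integral>\<omega>. (\<Prod>p\<in>K. exp (- ((X \<omega> p - a p) / \<sigma>)\<^sup>2 / 2)) \<partial>M)
       = (\<integral>\<omega>. (\<Prod>p\<in>K. exp (- ((- X \<omega> p - a p) / \<sigma>)\<^sup>2 / 2)) \<partial>M)"
proof -
  have m2: "\<And>p. p \<in> K \<Longrightarrow> (\<lambda>\<omega>. - X \<omega> p) \<in> borel_measurable M" by measurable
  have s2: "(\<integral>\<omega>. sin (\<Sum>p\<in>K. t p * (- X \<omega> p)) \<partial>M) = 0" for t
  proof -
    have "(\<integral>\<omega>. sin (\<Sum>p\<in>K. t p * (- X \<omega> p)) \<partial>M) = (\<integral>\<omega>. - sin (\<Sum>p\<in>K. t p * X \<omega> p) \<partial>M)"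
      by (simp add: sum_negf)
    also have "\<dots> = 0" using sinz[of t] by simp
    finally show ?thesis .
  qed
  have c2: "(\<integral>\<omega>. cos (\<Sum>p\<in>K. (T p / \<sigma>) * (- X \<omega> p)) \<partial>M) = (\<integral>\<omega>. cos (\<Sum>p\<in>K. (T p / \<sigma>) * X \<omega> p) \<partial>M)" for T
    by (simp add: sum_negf)
  show ?thesis
    using smooth_eq[OF K Xm sinz \<sigma>, of a] smooth_eq[OF K m2 s2 \<sigma>, of a] c2 by simp
qed

definition Fk :: "real \<Rightarrow> real \<Rightarrow> real \<Rightarrow> ennreal" where
  "Fk \<sigma> x u = (\<integral>\<^sup>+ a. ennreal (indicator {..x} a * exp (- ((u - a) / \<sigma>)\<^sup>2 / 2)) \<partial>lborel)"

lemma (in prob_space) nn_repr: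
  fixes K :: "'p set" and Y :: "'a \<Rightarrow> 'p \<Rightarrow> real"
  assumes K: "finite K" and Ym[measurable]: "\<And>p. p \<in> K \<Longrightarrow> (\<lambda>\<omega>. Y \<omega> p) \<in> borel_measurable M"
  shows "(\<integral>\<^sup>+\<omega>. (\<Prod>p\<in>K. Fk \<sigma> x (Y \<omega> p)) \<partial>M)
     = (\<integral>\<^sup>+a. ennreal (\<Prod>p\<in>K. indicator {..x} (a p)) *
          ennreal (\<integral>\<omega>. (\<Prod>p\<in>K. exp (- ((Y \<omega> p - a p) / \<sigma>)\<^sup>2 / 2)) \<partial>M) \<partial>(PiM K (\<lambda>_. lborel)))"
proof -
  let ?L = "PiM K (\<lambda>_. lborel :: real measure)"
  interpret L: finite_product_sigma_finite "\<lambda>_. lborel :: real measure" K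
    by (simp add: finite_product_sigma_finite_def product_sigma_finite_def finite_product_sigma_finite_axioms_def K lborel.sigma_finite_measure_axioms)
  interpret PL: pair_sigma_finite M ?L
    by (simp add: pair_sigma_finite_def sigma_finite_measure_axioms L.sigma_finite_measure_axioms)
  let ?g = "\<lambda>\<omega> a. (\<Prod>p\<in>K. ennreal (indicator {..x} (a p) * exp (- ((Y \<omega> p - a p) / \<sigma>)\<^sup>2 / 2)))"
  have "(\<integral>\<^sup>+\<omega>. (\<Prod>p\<in>K. Fk \<sigma> x (Y \<omega> p)) \<partial>M) = (\<integral>\<^sup>+\<omega>. (\<integral>\<^sup>+a. ?g \<omega> a \<partial>?L) \<partial>M)"
  proof (rule nn_integral_cong)
    fix \<omega>
    show "(\<Prod>p\<in>K. Fk \<sigma> x (Y \<omega> p)) = (\<integral>\<^sup>+a. ?g \<omega> a \<partial>?L)"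
      unfolding Fk_def
      by (subst L.product_nn_integral_prod[OF K]) auto
  qed
  also have "\<dots> = (\<integral>\<^sup>+a. (\<integral>\<^sup>+\<omega>. ?g \<omega> a \<partial>M) \<partial>?L)"
    by (rule PL.Fubini'[symmetric]) measurable
  also have "\<dots> = (\<integral>\<^sup>+a. ennreal (\<Prod>p\<in>K. indicator {..x} (a p)) *
          ennreal (\<integral>\<omega>. (\<Prod>p\<in>K. exp (- ((Y \<omega> p - a p) / \<sigma>)\<^sup>2 / 2)) \<partial>M) \<partial>?L)"
  proof (rule nn_integral_cong)
    fix a
    have e: "?g \<omega> a = ennreal (\<Prod>p\<in>K. indicator {..x} (a p)) * ennreal (\<Prod>p\<in>K. exp (- ((Y \<omega> p - a p) / \<sigma>)\<^sup>2 / 2))" for \<omega>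
      by (simp add: prod_ennreal[symmetric] prod.distrib ennreal_mult' prod_nonneg)
    have mb: "(\<lambda>\<omega>. \<Prod>p\<in>K. exp (- ((Y \<omega> p - a p) / \<sigma>)\<^sup>2 / 2)) \<in> borel_measurable M"
      by measurable
    have ib: "integrable M (\<lambda>\<omega>. \<Prod>p\<in>K. exp (- ((Y \<omega> p - a p) / \<sigma>)\<^sup>2 / 2))"
    proof (rule integrable_const_bound[where B=1])
      show "AE \<omega> in M. norm (\<Prod>p\<in>K. exp (- ((Y \<omega> p - a p) / \<sigma>)\<^sup>2 / 2)) \<le> 1"
        by (intro AE_I2) (auto simp: abs_prod intro!: prod_le_1)
    qed (rule mb)
    show "(\<integral>\<^sup>+\<omega>. ?g \<omega> a \<partial>M) = ennreal (\<Prod>p\<in>K. indicator {..x} (a p)) *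
          ennreal (\<integral>\<omega>. (\<Prod>p\<in>K. exp (- ((Y \<omega> p - a p) / \<sigma>)\<^sup>2 / 2)) \<partial>M)"
    proof -
      let ?c = "ennreal (\<Prod>p\<in>K. indicator {..x} (a p))"
      let ?f = "\<lambda>\<omega>. ennreal (\<Prod>p\<in>K. exp (- ((Y \<omega> p - a p) / \<sigma>)\<^sup>2 / 2))"
      have ni: "(\<integral>\<^sup>+\<omega>. ?f \<omega> \<partial>M) = ennreal (\<integral>\<omega>. (\<Prod>p\<in>K. exp (- ((Y \<omega> p - a p) / \<sigma>)\<^sup>2 / 2)) \<partial>M)"
        by (rule nn_integral_eq_integral[OF ib]) (auto intro!: prod_nonneg)
      have "(\<integral>\<^sup>+\<omega>. ?g \<omega> a \<partial>M) = (\<integral>\<^sup>+\<omega>. ?c * ?f \<omega> \<partial>M)"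
        by (simp only: e)
      also have "\<dots> = ?c * (\<integral>\<^sup>+\<omega>. ?f \<omega> \<partial>M)"
        by (rule nn_integral_cmult) (use mb in simp)
      finally show ?thesis by (simp only: ni)
    qed
  qed
  finally show ?thesis .
qed



lemma (in prob_space) orth_eq:
  fixes K :: "'p set" and X :: "'a \<Rightarrow> 'p \<Rightarrow> real"
  assumes K: "finite K" and Xm[measurable]: "\<And>p. p \<in> K \<Longrightarrow> (\<lambda>\<omega>. X \<omega> p) \<in> borel_measurable M"
    and sinz: "\<And>t. (\<integral>\<omega>. sin (\<Sum>p\<in>K. t p * X \<omega> p) \<partial>M) = 0"
    and \<sigma>: "0 < \<sigma>"
  shows "(\<integral>\<^sup>+\<omega>. (\<Prod>p\<in>K. Fk \<sigma> x (X \<omega> p)) \<partial>M) = (\<integral>\<^sup>+\<omega>. (\<Prod>p\<in>K. Fk \<sigma> x (- X \<omega> p)) \<partial>M)"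
proof -
  have m2: "\<And>p. p \<in> K \<Longrightarrow> (\<lambda>\<omega>. - X \<omega> p) \<in> borel_measurable M" by measurable
  show ?thesis
    using nn_repr[OF K Xm, where \<sigma>=\<sigma> and x=x] nn_repr[OF K m2, where \<sigma>=\<sigma> and x=x]
    using smooth_sym[OF K Xm sinz \<sigma>] by simp
qed

definition Gm :: "real \<Rightarrow> real \<Rightarrow> real \<Rightarrow> real" where
  "Gm \<sigma> x u = measure std_normal_distribution {(u - x) / \<sigma> ..}"

lemma Fk_eq:
  assumes \<sigma>: "0 < \<sigma>"
  shows "Fk \<sigma> x u = ennreal (\<sigma> * sqrt (2 * pi)) * ennreal (Gm \<sigma> x u)"
proof -
  interpret S: prob_space std_normal_distribution by (rule std_normal_prob)
  let ?f = "\<lambda>a. ennreal (indicator {..x} a * exp (- ((u - a) / \<sigma>)\<^sup>2 / 2))"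
  have "Fk \<sigma> x u = ennreal \<bar>- \<sigma>\<bar> * (\<integral>\<^sup>+s. ?f (u + (- \<sigma>) * s) \<partial>lborel)"
    unfolding Fk_def
    by (rule nn_integral_real_affine) (use \<sigma> in auto)
  also have "(\<integral>\<^sup>+s. ?f (u + (- \<sigma>) * s) \<partial>lborel)
      = (\<integral>\<^sup>+s. ennreal (sqrt (2 * pi)) * ennreal (std_normal_density s * indicator {(u - x) / \<sigma> ..} s) \<partial>lborel)"
  proof (rule nn_integral_cong)
    fix s
    have i: "indicator {..x} (u + (- \<sigma>) * s) = (indicator {(u - x) / \<sigma> ..} s :: real)"
      using \<sigma> by (auto simp: indicator_def field_simps)
    have e: "(u - (u + - \<sigma> * s)) / \<sigma> = s" using \<sigma> by (simp add: field_simps)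
    have "indicator {..x} (u + (- \<sigma>) * s) * exp (- ((u - (u + (- \<sigma>) * s)) / \<sigma>)\<^sup>2 / 2)
        = sqrt (2 * pi) * (std_normal_density s * indicator {(u - x) / \<sigma> ..} s)"
      unfolding i e std_normal_density_def by simp
    then show "?f (u + (- \<sigma>) * s) = ennreal (sqrt (2 * pi)) * ennreal (std_normal_density s * indicator {(u - x) / \<sigma> ..} s)"
      by (simp add: ennreal_mult'[symmetric])
  qed
  also have "\<dots> = ennreal (sqrt (2 * pi)) * (\<integral>\<^sup>+s. ennreal (std_normal_density s * indicator {(u - x) / \<sigma> ..} s) \<partial>lborel)"
    by (rule nn_integral_cmult) measurable
  also have "(\<integral>\<^sup>+s. ennreal (std_normal_density s * indicator {(u - x) / \<sigma> ..} s) \<partial>lborel)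
      = emeasure std_normal_distribution {(u - x) / \<sigma> ..}"
    by (subst emeasure_density) (auto intro!: nn_integral_cong simp: ennreal_mult' indicator_def)
  also have "\<dots> = ennreal (Gm \<sigma> x u)"
    unfolding Gm_def by (rule S.emeasure_eq_measure)
  finally show ?thesis
    using \<sigma> by (simp add: ennreal_mult' mult_ac)
qed



lemma Gm_nonneg: "0 \<le> Gm \<sigma> x u" unfolding Gm_def by simp
lemma Gm_le1: "Gm \<sigma> x u \<le> 1"
proof -
  interpret S: prob_space std_normal_distribution by (rule std_normal_prob)
  show ?thesis unfolding Gm_def by (rule S.prob_le_1)
qed

lemma Gm_meas:
  assumes \<sigma>: "0 < \<sigma>"
  shows "Gm \<sigma> x \<in> borel_measurable borel"
proof -
  interpret S: prob_space std_normal_distribution by (rule std_normal_prob)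
  let ?h = "\<lambda>v. measure std_normal_distribution {(- v - x) / \<sigma> ..}"
  have "mono ?h"
  proof (rule monoI)
    fix v w :: real assume "v \<le> w"
    then have "(- w - x) / \<sigma> \<le> (- v - x) / \<sigma>" using \<sigma> by (simp add: divide_right_mono)
    then have "{(- v - x) / \<sigma> ..} \<subseteq> {(- w - x) / \<sigma> ..}" by auto
    then show "?h v \<le> ?h w"
      by (intro S.finite_measure_mono) auto
  qed
  then have hm: "?h \<in> borel_measurable borel" by (rule borel_measurable_mono)
  have eq: "Gm \<sigma> x = (\<lambda>u. ?h (- u))" unfolding Gm_def by auto
  show ?thesis
    by (subst eq, rule measurable_compose[OF _ hm]) simp
qed

lemma prod_Fk:
  assumes \<sigma>: "0 < \<sigma>"
  shows "(\<Prod>p\<in>K. Fk \<sigma> x (u p)) = ennreal ((\<sigma> * sqrt (2 * pi)) ^ card K * (\<Prod>p\<in>K. Gm \<sigma> x (u p)))"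
proof -
  have "(\<Prod>p\<in>K. Fk \<sigma> x (u p)) = (\<Prod>p\<in>K. ennreal (\<sigma> * sqrt (2 * pi) * Gm \<sigma> x (u p)))"
    using \<sigma> by (simp add: Fk_eq ennreal_mult Gm_nonneg)
  also have "\<dots> = ennreal (\<Prod>p\<in>K. \<sigma> * sqrt (2 * pi) * Gm \<sigma> x (u p))"
    using \<sigma> by (intro prod_ennreal) (simp add: Gm_nonneg)
  also have "(\<Prod>p\<in>K. \<sigma> * sqrt (2 * pi) * Gm \<sigma> x (u p)) = (\<sigma> * sqrt (2 * pi)) ^ card K * (\<Prod>p\<in>K. Gm \<sigma> x (u p))"
    by (simp add: prod.distrib)
  finally show ?thesis .
qed

lemma (in prob_space) G_eq:
  fixes K :: "'p set" and X :: "'a \<Rightarrow> 'p \<Rightarrow> real"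
  assumes K: "finite K" and Xm[measurable]: "\<And>p. p \<in> K \<Longrightarrow> (\<lambda>\<omega>. X \<omega> p) \<in> borel_measurable M"
    and sinz: "\<And>t. (\<integral>\<omega>. sin (\<Sum>p\<in>K. t p * X \<omega> p) \<partial>M) = 0"
    and \<sigma>: "0 < \<sigma>"
  shows "(\<integral>\<omega>. (\<Prod>p\<in>K. Gm \<sigma> x (X \<omega> p)) \<partial>M) = (\<integral>\<omega>. (\<Prod>p\<in>K. Gm \<sigma> x (- X \<omega> p)) \<partial>M)"
proof -
  let ?C = "(\<sigma> * sqrt (2 * pi)) ^ card K"
  have C: "0 < ?C" using \<sigma> by simp
  note Gmm[measurable] = Gm_meas[OF \<sigma>, of x]
  have gen: "(\<integral>\<^sup>+\<omega>. (\<Prod>p\<in>K. Fk \<sigma> x (Y \<omega> p)) \<partial>M) = ennreal (?C * (\<integral>\<omega>. (\<Prod>p\<in>K. Gm \<sigma> x (Y \<omega> p)) \<partial>M))"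
    if Ym[measurable]: "\<And>p. p \<in> K \<Longrightarrow> (\<lambda>\<omega>. Y \<omega> p) \<in> borel_measurable M" for Y :: "'a \<Rightarrow> 'p \<Rightarrow> real"
  proof -
    have mb: "(\<lambda>\<omega>. ?C * (\<Prod>p\<in>K. Gm \<sigma> x (Y \<omega> p))) \<in> borel_measurable M" by measurable
    have ib: "integrable M (\<lambda>\<omega>. ?C * (\<Prod>p\<in>K. Gm \<sigma> x (Y \<omega> p)))"
    proof (rule integrable_const_bound[where B="?C"])
      show "AE \<omega> in M. norm (?C * (\<Prod>p\<in>K. Gm \<sigma> x (Y \<omega> p))) \<le> ?C"
        using C by (intro AE_I2) (auto simp: abs_prod Gm_nonneg Gm_le1 abs_mult intro!: prod_le_1 mult_left_le)
    qed (rule mb)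
    have "(\<integral>\<^sup>+\<omega>. (\<Prod>p\<in>K. Fk \<sigma> x (Y \<omega> p)) \<partial>M) = (\<integral>\<^sup>+\<omega>. ennreal (?C * (\<Prod>p\<in>K. Gm \<sigma> x (Y \<omega> p))) \<partial>M)"
      by (simp only: prod_Fk[OF \<sigma>])
    also have "\<dots> = ennreal (\<integral>\<omega>. ?C * (\<Prod>p\<in>K. Gm \<sigma> x (Y \<omega> p)) \<partial>M)"
      by (rule nn_integral_eq_integral[OF ib]) (use C in \<open>auto intro!: AE_I2 mult_nonneg_nonneg prod_nonneg Gm_nonneg\<close>)
    finally show ?thesis by simp
  qed
  have m2: "\<And>p. p \<in> K \<Longrightarrow> (\<lambda>\<omega>. - X \<omega> p) \<in> borel_measurable M" by measurable
  have "ennreal (?C * (\<integral>\<omega>. (\<Prod>p\<in>K. Gm \<sigma> x (X \<omega> p)) \<partial>M)) = ennreal (?C * (\<integral>\<omega>. (\<Prod>p\<in>K. Gm \<sigma> x (- X \<omega> p)) \<partial>M))"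
    using gen[OF Xm] gen[OF m2] orth_eq[OF K Xm sinz \<sigma>, of x] by simp
  moreover have "0 \<le> (\<integral>\<omega>. (\<Prod>p\<in>K. Gm \<sigma> x (X \<omega> p)) \<partial>M)" "0 \<le> (\<integral>\<omega>. (\<Prod>p\<in>K. Gm \<sigma> x (- X \<omega> p)) \<partial>M)"
    by (auto intro!: integral_nonneg_AE AE_I2 prod_nonneg Gm_nonneg)
  ultimately show ?thesis using C \<sigma> by (simp add: ennreal_inj)
qed



lemma Gm_alt: "Gm (1 / real (Suc m)) x u = measure std_normal_distribution {(u - x) * real (Suc m) ..}"
  unfolding Gm_def by simp

lemma Gm_lim_lt:
  assumes "u < x"
  shows "(\<lambda>m. Gm (1 / real (Suc m)) x u) \<longlonglongrightarrow> 1"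
proof -
  interpret R: real_distribution std_normal_distribution by (rule real_dist_normal_dist)
  let ?y = "\<lambda>m. (u - x) * real (Suc m)"
  have fy: "filterlim ?y at_bot sequentially"
    using assms by real_asymp
  have c0: "(\<lambda>m. cdf std_normal_distribution (?y m)) \<longlonglongrightarrow> 0"
    using filterlim_compose[OF R.cdf_lim_at_bot fy] .
  have lo: "1 - cdf std_normal_distribution (?y m) \<le> Gm (1 / real (Suc m)) x u" for m
  proof -
    have "{?y m ..} = space std_normal_distribution - {..< ?y m}" by auto
    then have "measure std_normal_distribution {?y m ..} = 1 - measure std_normal_distribution {..< ?y m}"
      by (metis R.prob_compl lessThan_borel R.sets_M)
    moreover have "measure std_normal_distribution {..< ?y m} \<le> cdf std_normal_distribution (?y m)"
      unfolding cdf_def by (rule R.finite_measure_mono) auto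
    ultimately show ?thesis unfolding Gm_alt by simp
  qed
  have hi: "Gm (1 / real (Suc m)) x u \<le> 1" for m by (rule Gm_le1)
  have t1: "(\<lambda>m. 1 - cdf std_normal_distribution (?y m)) \<longlonglongrightarrow> 1"
    using tendsto_diff[OF tendsto_const c0, of 1] by simp
  show ?thesis
    by (rule tendsto_sandwich[OF always_eventually always_eventually t1 tendsto_const]) (use lo hi in auto)
qed

lemma Gm_lim_gt:
  assumes "x < u"
  shows "(\<lambda>m. Gm (1 / real (Suc m)) x u) \<longlonglongrightarrow> 0"
proof -
  interpret R: real_distribution std_normal_distribution by (rule real_dist_normal_dist)
  let ?y = "\<lambda>m. (u - x) * real (Suc m) - 1"
  have fy: "filterlim ?y at_top sequentially"
    using assms by real_asymp
  have c1: "(\<lambda>m. cdf std_normal_distribution (?y m)) \<longlonglongrightarrow> 1"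
    using filterlim_compose[OF R.cdf_lim_at_top_prob fy] .
  have hi: "Gm (1 / real (Suc m)) x u \<le> 1 - cdf std_normal_distribution (?y m)" for m
  proof -
    have "space std_normal_distribution - {.. ?y m} = {?y m <..}" by auto
    then have "measure std_normal_distribution {?y m <..} = 1 - measure std_normal_distribution {.. ?y m}"
      by (metis R.prob_compl atMost_borel R.sets_M)
    moreover have "measure std_normal_distribution {(u - x) * real (Suc m) ..} \<le> measure std_normal_distribution {?y m <..}"
      by (rule R.finite_measure_mono) auto
    ultimately show ?thesis unfolding Gm_alt cdf_def by simp
  qed
  have lo: "0 \<le> Gm (1 / real (Suc m)) x u" for m by (rule Gm_nonneg)
  have t1: "(\<lambda>m. 1 - cdf std_normal_distribution (?y m)) \<longlonglongrightarrow> 0"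
    using tendsto_diff[OF tendsto_const c1, of 1] by simp
  show ?thesis
    by (rule tendsto_sandwich[OF always_eventually always_eventually tendsto_const t1]) (use lo hi in auto)
qed



lemma (in prob_space) lim_orth:
  fixes K :: "'p set" and X :: "'a \<Rightarrow> 'p \<Rightarrow> real"
  assumes K: "finite K" and Xm[measurable]: "\<And>p. p \<in> K \<Longrightarrow> (\<lambda>\<omega>. X \<omega> p) \<in> borel_measurable M"
    and na: "\<And>p. p \<in> K \<Longrightarrow> prob {\<omega>\<in>space M. X \<omega> p = x} = 0"
  shows "(\<lambda>m. \<integral>\<omega>. (\<Prod>p\<in>K. Gm (1 / real (Suc m)) x (X \<omega> p)) \<partial>M) \<longlonglongrightarrow> prob {\<omega>\<in>space M. \<forall>p\<in>K. X \<omega> p \<le> x}"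
proof -
  let ?A = "{\<omega>\<in>space M. \<forall>p\<in>K. X \<omega> p \<le> x}"
  have Am: "?A \<in> events"
  proof (rule sets.sets_Collect_finite_All[OF _ K])
    fix p assume p: "p \<in> K"
    note Xp[measurable] = Xm[OF p]
    show "{\<omega>\<in>space M. X \<omega> p \<le> x} \<in> events" by measurable
  qed
  have "prob ?A = (\<integral>\<omega>. indicator ?A \<omega> \<partial>M)"
    using Am by simp
  moreover have "(\<lambda>m. \<integral>\<omega>. (\<Prod>p\<in>K. Gm (1 / real (Suc m)) x (X \<omega> p)) \<partial>M) \<longlonglongrightarrow> (\<integral>\<omega>. indicator ?A \<omega> \<partial>M)"
  proof (rule integral_dominated_convergence[where w="\<lambda>_. 1"])
    show "indicator ?A \<in> borel_measurable M" using Am by simp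
    fix m
    note Gmm[measurable] = Gm_meas[of "1 / real (Suc m)" x]
    show "(\<lambda>\<omega>. \<Prod>p\<in>K. Gm (1 / real (Suc m)) x (X \<omega> p)) \<in> borel_measurable M"
      by measurable
    show "AE \<omega> in M. norm (\<Prod>p\<in>K. Gm (1 / real (Suc m)) x (X \<omega> p)) \<le> 1"
      by (intro AE_I2) (auto simp: abs_prod Gm_nonneg Gm_le1 intro!: prod_le_1)
  next
    show "integrable M (\<lambda>_. 1::real)" by simp
  next
    have ae: "AE \<omega> in M. \<forall>p\<in>K. X \<omega> p \<noteq> x"
    proof (rule AE_finite_allI[OF K])
      fix p assume p: "p \<in> K"
      have "{\<omega>\<in>space M. X \<omega> p = x} \<in> null_sets M"
        using na[OF p] p by (simp add: null_sets_def emeasure_eq_measure)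
      then show "AE \<omega> in M. X \<omega> p \<noteq> x"
        by (rule AE_I') auto
    qed
    show "AE \<omega> in M. (\<lambda>m. \<Prod>p\<in>K. Gm (1 / real (Suc m)) x (X \<omega> p)) \<longlonglongrightarrow> indicator ?A \<omega>"
      using ae
    proof (rule AE_mp, intro AE_I2 impI)
      fix \<omega> assume \<omega>: "\<omega> \<in> space M" and ne: "\<forall>p\<in>K. X \<omega> p \<noteq> x"
      have lim: "(\<lambda>m. \<Prod>p\<in>K. Gm (1 / real (Suc m)) x (X \<omega> p)) \<longlonglongrightarrow> (\<Prod>p\<in>K. if X \<omega> p \<le> x then 1 else 0)"
      proof (rule tendsto_prod)
        fix p assume p: "p \<in> K"
        show "(\<lambda>m. Gm (1 / real (Suc m)) x (X \<omega> p)) \<longlonglongrightarrow> (if X \<omega> p \<le> x then 1 else 0)"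
        proof (cases "X \<omega> p \<le> x")
          case True
          then have "X \<omega> p < x" using ne p by force
          then show ?thesis using True Gm_lim_lt by simp
        next
          case False
          then show ?thesis using Gm_lim_gt[of x "X \<omega> p"] by simp
        qed
      qed
      have "(\<Prod>p\<in>K. if X \<omega> p \<le> x then 1 else 0) = (indicator ?A \<omega> :: real)"
      proof (cases "\<forall>p\<in>K. X \<omega> p \<le> x")
        case True then show ?thesis using \<omega> by (simp add: indicator_def)
      next
        case False
        then obtain p where "p \<in> K" "\<not> X \<omega> p \<le> x" by auto
        then have "(\<Prod>p\<in>K. if X \<omega> p \<le> x then 1 else 0) = (0::real)"
          using K by (intro prod_zero) auto
        then show ?thesis using False by (simp add: indicator_def)
      qed
      then show "(\<lambda>m. \<Prod>p\<in>K. Gm (1 / real (Suc m)) x (X \<omega> p)) \<longlonglongrightarrow> indicator ?A \<omega>"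
        using lim by simp
    qed
  qed
  ultimately show ?thesis by simp
qed

lemma (in prob_space) orthant_sym:
  fixes K :: "'p set" and X :: "'a \<Rightarrow> 'p \<Rightarrow> real"
  assumes K: "finite K" and Xm[measurable]: "\<And>p. p \<in> K \<Longrightarrow> (\<lambda>\<omega>. X \<omega> p) \<in> borel_measurable M"
    and sinz: "\<And>t. (\<integral>\<omega>. sin (\<Sum>p\<in>K. t p * X \<omega> p) \<partial>M) = 0"
    and na1: "\<And>p. p \<in> K \<Longrightarrow> prob {\<omega>\<in>space M. X \<omega> p = x} = 0"
    and na2: "\<And>p. p \<in> K \<Longrightarrow> prob {\<omega>\<in>space M. - X \<omega> p = x} = 0"
  shows "prob {\<omega>\<in>space M. \<forall>p\<in>K. X \<omega> p \<le> x} = prob {\<omega>\<in>space M. \<forall>p\<in>K. - X \<omega> p \<le> x}"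
proof -
  have m2: "\<And>p. p \<in> K \<Longrightarrow> (\<lambda>\<omega>. - X \<omega> p) \<in> borel_measurable M" by measurable
  have "(\<lambda>m. \<integral>\<omega>. (\<Prod>p\<in>K. Gm (1 / real (Suc m)) x (X \<omega> p)) \<partial>M)
      = (\<lambda>m. \<integral>\<omega>. (\<Prod>p\<in>K. Gm (1 / real (Suc m)) x (- X \<omega> p)) \<partial>M)"
  proof (rule ext)
    fix m :: nat
    have pos: "0 < 1 / real (Suc m)" by (rule divide_pos_pos) auto
    show "(\<integral>\<omega>. (\<Prod>p\<in>K. Gm (1 / real (Suc m)) x (X \<omega> p)) \<partial>M)
      = (\<integral>\<omega>. (\<Prod>p\<in>K. Gm (1 / real (Suc m)) x (- X \<omega> p)) \<partial>M)"
      using G_eq[OF K Xm sinz pos, of x] .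
  qed
  then show ?thesis
  proof -
    have l1: "(\<lambda>m. \<integral>\<omega>. (\<Prod>p\<in>K. Gm (1 / real (Suc m)) x (X \<omega> p)) \<partial>M) \<longlonglongrightarrow> prob {\<omega>\<in>space M. \<forall>p\<in>K. X \<omega> p \<le> x}"
      by (rule lim_orth[OF K]) (auto intro: Xm na1)
    have l2: "(\<lambda>m. \<integral>\<omega>. (\<Prod>p\<in>K. Gm (1 / real (Suc m)) x (- X \<omega> p)) \<partial>M) \<longlonglongrightarrow> prob {\<omega>\<in>space M. \<forall>p\<in>K. - X \<omega> p \<le> x}"
      by (rule lim_orth[OF K]) (auto intro: m2 na2)
    assume eq: "(\<lambda>m. \<integral>\<omega>. (\<Prod>p\<in>K. Gm (1 / real (Suc m)) x (X \<omega> p)) \<partial>M)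
      = (\<lambda>m. \<integral>\<omega>. (\<Prod>p\<in>K. Gm (1 / real (Suc m)) x (- X \<omega> p)) \<partial>M)"
    show ?thesis using l1 unfolding eq using LIMSEQ_unique[OF _ l2] by blast
  qed
qed

lemma sin_normal_zero: "(\<integral>x. normal_density 0 s x * sin x \<partial>lborel) = 0"
proof -
  have "(\<integral>x. normal_density 0 s x * sin x \<partial>lborel) = \<bar>- 1\<bar> *\<^sub>R (\<integral>x. normal_density 0 s (0 + (- 1) * x) * sin (0 + (- 1) * x) \<partial>lborel)"
    by (rule lborel_integral_real_affine) simp
  also have "\<dots> = - (\<integral>x. normal_density 0 s x * sin x \<partial>lborel)"
    by (simp add: normal_density_def)
  finally show ?thesis by simp
qed

lemma gauss_sinz:
  assumes G: "centered_gaussian_vector N P X C" and P: "finite P" and KP: "K \<subseteq> P"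
  shows "(\<integral>\<omega>. sin (\<Sum>p\<in>K. t p * X \<omega> p) \<partial>N) = 0"
proof -
  interpret prob_space N using G unfolding centered_gaussian_vector_def by blast
  have Xm[measurable]: "\<And>p. p \<in> P \<Longrightarrow> (\<lambda>x. X x p) \<in> borel_measurable N"
    using G unfolding centered_gaussian_vector_def by blast
  let ?c = "\<lambda>p. if p \<in> K then t p else 0"
  let ?s2 = "\<Sum>p\<in>P. \<Sum>q\<in>P. ?c p * ?c q * C p q"
  have D: "distr N borel (\<lambda>x. \<Sum>p\<in>P. ?c p * X x p) =
             (if ?s2 = 0 then return borel 0 else density lborel (normal_density 0 (sqrt ?s2)))"
  proof -
    have "\<forall>c. distr N borel (\<lambda>x. \<Sum>p\<in>P. c p * X x p) =
             (if (\<Sum>p\<in>P. \<Sum>q\<in>P. c p * c q * C p q) = 0 then return borel 0 else density lborel (normal_density 0 (sqrt (\<Sum>p\<in>P. \<Sum>q\<in>P. c p * c q * C p q))))"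
      using G unfolding centered_gaussian_vector_def Let_def by blast
    then show ?thesis by (rule allE[where x="?c"])
  qed
  have sm: "(\<Sum>p\<in>P. ?c p * X x p) = (\<Sum>p\<in>K. t p * X x p)" for x
  proof -
    have "(\<Sum>p\<in>P. ?c p * X x p) = (\<Sum>p\<in>P. if p \<in> K then t p * X x p else 0)"
      by (rule sum.cong) auto
    also have "\<dots> = (\<Sum>p\<in>P \<inter> K. t p * X x p)" using P by (rule sum.inter_restrict[symmetric])
    also have "P \<inter> K = K" using KP by auto
    finally show ?thesis .
  qed
  have Ym: "(\<lambda>x. \<Sum>p\<in>P. ?c p * X x p) \<in> borel_measurable N" by measurable
  have "(\<integral>\<omega>. sin (\<Sum>p\<in>K. t p * X \<omega> p) \<partial>N) = (\<integral>\<omega>. sin (\<Sum>p\<in>P. ?c p * X \<omega> p) \<partial>N)"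
    by (simp only: sm)
  also have "\<dots> = (\<integral>y. sin y \<partial>distr N borel (\<lambda>x. \<Sum>p\<in>P. ?c p * X x p))"
    by (rule integral_distr[symmetric]) (use Ym in auto)
  also have "\<dots> = 0"
  proof (cases "?s2 = 0")
    case True
    then show ?thesis unfolding D by (simp add: integral_return)
  next
    case False
    then have "(\<integral>y. sin y \<partial>distr N borel (\<lambda>x. \<Sum>p\<in>P. ?c p * X x p))
        = (\<integral>y. sin y \<partial>density lborel (normal_density 0 (sqrt ?s2)))" unfolding D by simp
    also have "\<dots> = (\<integral>y. normal_density 0 (sqrt ?s2) y * sin y \<partial>lborel)"
      by (subst integral_density) auto
    also have "\<dots> = 0" by (rule sin_normal_zero)
    finally show ?thesis .
  qed
  finally show ?thesis .
qed

lemma gauss_noatom: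
  assumes G: "centered_gaussian_vector N P X C" and P: "finite P" and p: "p \<in> P" and C1: "C p p = 1"
  shows "measure N {\<omega>\<in>space N. X \<omega> p = y} = 0"
proof -
  interpret prob_space N using G unfolding centered_gaussian_vector_def by blast
  have Xm[measurable]: "\<And>p. p \<in> P \<Longrightarrow> (\<lambda>x. X x p) \<in> borel_measurable N"
    using G unfolding centered_gaussian_vector_def by blast
  let ?c = "\<lambda>q. if q = p then 1 else 0 :: real"
  let ?s2 = "\<Sum>q\<in>P. \<Sum>r\<in>P. ?c q * ?c r * C q r"
  have D: "distr N borel (\<lambda>x. \<Sum>q\<in>P. ?c q * X x q) =
             (if ?s2 = 0 then return borel 0 else density lborel (normal_density 0 (sqrt ?s2)))"
  proof -
    have "\<forall>c. distr N borel (\<lambda>x. \<Sum>p\<in>P. c p * X x p) =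
             (if (\<Sum>p\<in>P. \<Sum>q\<in>P. c p * c q * C p q) = 0 then return borel 0 else density lborel (normal_density 0 (sqrt (\<Sum>p\<in>P. \<Sum>q\<in>P. c p * c q * C p q))))"
      using G unfolding centered_gaussian_vector_def Let_def by blast
    then show ?thesis by (rule allE[where x="?c"])
  qed
  have e: "?c q * ?c r * C q r = (if q = p then (if r = p then C q r else 0) else 0)" for q r by simp
  have s2: "?s2 = 1"
  proof -
    have "?s2 = (\<Sum>q\<in>P. if q = p then (\<Sum>r\<in>P. if r = p then C q r else 0) else 0)"
      unfolding e by (rule sum.cong) auto
    also have "\<dots> = (\<Sum>r\<in>P. if r = p then C p r else 0)"
      using sum.delta[OF P, of p "\<lambda>q. (\<Sum>r\<in>P. if r = p then C q r else 0)"] p by simp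
    also have "\<dots> = C p p"
      using sum.delta[OF P, of p "\<lambda>r. C p r"] p by simp
    finally show ?thesis using C1 by simp
  qed
  have sm: "(\<lambda>x. \<Sum>q\<in>P. ?c q * X x q) = (\<lambda>x. X x p)"
  proof (rule ext)
    fix x
    have "(\<Sum>q\<in>P. ?c q * X x q) = (\<Sum>q\<in>P. if q = p then X x q else 0)"
      by (rule sum.cong) auto
    then show "(\<Sum>q\<in>P. ?c q * X x q) = X x p"
      using sum.delta[OF P, of p "\<lambda>q. X x q"] p by simp
  qed
  have D2: "distr N borel (\<lambda>x. X x p) = density lborel (normal_density 0 1)"
    using D s2 sm by simp
  have "measure N {\<omega>\<in>space N. X \<omega> p = y} = measure (distr N borel (\<lambda>x. X x p)) {y}"
  proof -
    have "(\<lambda>x. X x p) -` {y} \<inter> space N = {\<omega>\<in>space N. X \<omega> p = y}" by auto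
    then show ?thesis by (subst measure_distr) (auto intro: Xm[OF p])
  qed
  also have "\<dots> = 0"
  proof -
    have "{y} \<in> null_sets (density lborel (normal_density 0 1))"
    proof -
      have ae: "AE x in lborel. x \<in> {y} \<longrightarrow> normal_density 0 1 x = 0"
        using AE_lborel_singleton[of y] by (rule eventually_mono) auto
      then show ?thesis by (subst null_sets_density_iff) auto
    qed
    then show ?thesis unfolding D2 by (simp add: measure_def null_sets_def)
  qed
  finally show ?thesis .
qed

lemma quant_generic:
  fixes F :: "real \<Rightarrow> real"
  assumes mono: "mono F" and rc: "\<And>x. continuous (at_right x) F"
    and bot: "(F \<longlongrightarrow> 0) at_bot" and top: "(F \<longlongrightarrow> 1) at_top"
    and \<tau>: "0 < \<tau>" "\<tau> < 1"
  shows "\<tau> \<le> F (Inf {x. \<tau> \<le> F x})" and "\<And>x. \<tau> \<le> F x \<Longrightarrow> Inf {x. \<tau> \<le> F x} \<le> x"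
proof -
  let ?S = "{x. \<tau> \<le> F x}"
  have "eventually (\<lambda>x. \<tau> < F x) at_top" using order_tendstoD(1)[OF top \<tau>(2)] .
  then obtain x0 where "\<And>x. x \<ge> x0 \<Longrightarrow> \<tau> < F x" by (auto simp: eventually_at_top_linorder)
  then have ne: "?S \<noteq> {}" by (metis (mono_tags, lifting) empty_iff less_eq_real_def mem_Collect_eq order_refl)
  have "eventually (\<lambda>x. F x < \<tau>) at_bot" using order_tendstoD(2)[OF bot \<tau>(1)] .
  then obtain b where b: "\<And>x. x \<le> b \<Longrightarrow> F x < \<tau>" by (auto simp: eventually_at_bot_linorder)
  have bdd: "bdd_below ?S"
  proof (rule bdd_belowI)
    fix s assume "s \<in> ?S"
    show "b \<le> s"
    proof (rule ccontr)
      assume "\<not> b \<le> s"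
      then have "F s < \<tau>" by (intro b) simp
      then show False using \<open>s \<in> ?S\<close> by simp
    qed
  qed
  show low: "\<And>x. \<tau> \<le> F x \<Longrightarrow> Inf ?S \<le> x"
    using bdd by (intro cInf_lower) auto
  show "\<tau> \<le> F (Inf ?S)"
  proof (rule ccontr)
    let ?q = "Inf ?S"
    assume "\<not> \<tau> \<le> F ?q"
    then have lt: "F ?q < \<tau>" by simp
    have "(F \<longlongrightarrow> F ?q) (at_right ?q)" using rc[of ?q] by (simp add: continuous_within)
    from order_tendstoD(2)[OF this lt]
    have "eventually (\<lambda>y. F y < \<tau>) (at_right ?q)" .
    then obtain d where d: "d > ?q" "\<And>y. ?q < y \<Longrightarrow> y < d \<Longrightarrow> F y < \<tau>"
      by (auto simp: eventually_at_right_field)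
    obtain s where s: "s \<in> ?S" "s < d" using cInf_less_iff[OF ne bdd] d(1) by blast
    have "?q \<le> s" using low s(1) by simp
    show False
    proof (cases "s = ?q")
      case True then show False using s(1) lt by simp
    next
      case False then have "?q < s" using \<open>?q \<le> s\<close> by simp
      then show False using d(2)[OF _ s(2)] s(1) by force
    qed
  qed
qed

lemma (in prob_space) quantile_props:
  assumes Y[measurable]: "Y \<in> borel_measurable M" and \<tau>: "0 < \<tau>" "\<tau> < 1"
  shows "\<tau> \<le> prob {y\<in>space M. Y y \<le> quantile M Y \<tau>}"
    and "\<And>x. \<tau> \<le> prob {y\<in>space M. Y y \<le> x} \<Longrightarrow> quantile M Y \<tau> \<le> x"
proof -
  interpret R: real_distribution "distr M borel Y" by (rule real_distribution_distr) simp
  have F: "prob {y\<in>space M. Y y \<le> x} = cdf (distr M borel Y) x" for x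
  proof -
    have "Y -` {..x} \<inter> space M = {y\<in>space M. Y y \<le> x}" by auto
    then show ?thesis unfolding cdf_def by (subst measure_distr) auto
  qed
  have mono: "mono (cdf (distr M borel Y))" by (intro monoI R.cdf_nondecreasing)
  have q: "quantile M Y \<tau> = Inf {x. \<tau> \<le> cdf (distr M borel Y) x}"
    unfolding quantile_def F ..
  note qg = quant_generic[OF mono R.cdf_is_right_cont R.cdf_lim_at_bot R.cdf_lim_at_top_prob \<tau>]
  show "\<tau> \<le> prob {y\<in>space M. Y y \<le> quantile M Y \<tau>}" unfolding F q by (rule qg(1))
  show "\<And>x. \<tau> \<le> prob {y\<in>space M. Y y \<le> x} \<Longrightarrow> quantile M Y \<tau> \<le> x" unfolding F q by (rule qg(2))
qed

lemma (in prob_space) prob_Int_lb: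
  assumes "A \<in> events" "B \<in> events"
  shows "prob A + prob B - 1 \<le> prob (A \<inter> B)"
proof -
  have "prob (A \<union> B) = prob A + prob B - prob (A \<inter> B)"
    using assms by (intro measure_Un3) (auto simp: fmeasurable_def emeasure_eq_measure)
  moreover have "prob (A \<union> B) \<le> 1" by simp
  ultimately show ?thesis by simp
qed

lemma Max_le_rect:
  assumes "finite K" "K \<noteq> {}"
  shows "{y\<in>S. Max (f y ` K) \<le> (x::real)} = {y\<in>S. \<forall>p\<in>K. f y p \<in> {..x}}"
  using assms by auto

theorem proposition3:
  fixes M :: "'a measure"
    and Pi :: "'p set"
    and n :: nat
    and V :: "'p \<Rightarrow> real"
    and Vhat shat :: "'a \<Rightarrow> 'p \<Rightarrow> real"
    and N :: "'b measure" and Z :: "'b \<Rightarrow> 'p \<Rightarrow> real" and CZ :: "'p \<Rightarrow> 'p \<Rightarrow> real"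
    and Chat :: "'a \<Rightarrow> 'p \<Rightarrow> 'p \<Rightarrow> real"
    and Pst :: "'a \<Rightarrow> 'c measure" and Zst :: "'a \<Rightarrow> 'c \<Rightarrow> 'p \<Rightarrow> real"
    and r \<delta> \<alpha> \<beta> :: real
    and pihat :: "'a \<Rightarrow> 'p"
  assumes M: "prob_space M"
    and Pi: "finite Pi" "Pi \<noteq> {}"
    and n: "0 < n"
    and Vhat_meas: "\<And>p. p \<in> Pi \<Longrightarrow> (\<lambda>\<omega>. Vhat \<omega> p) \<in> borel_measurable M"
    and shat_meas: "\<And>p. p \<in> Pi \<Longrightarrow> (\<lambda>\<omega>. shat \<omega> p) \<in> borel_measurable M"
    and shat_pos: "\<And>\<omega> p. \<omega> \<in> space M \<Longrightarrow> p \<in> Pi \<Longrightarrow> 0 < shat \<omega> p"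
    and Z: "centered_gaussian_vector N Pi Z CZ" "\<And>p. p \<in> Pi \<Longrightarrow> CZ p p = 1"
    and r: "0 \<le> r"
    and G: "\<And>I. rectangle_family Pi I \<Longrightarrow>
              \<bar>prob_rect M Pi (\<lambda>\<omega> p. (Vhat \<omega> p - V p) / shat \<omega> p) I - prob_rect N Pi Z I\<bar> \<le> r"
    and boot: "\<And>\<omega>. \<omega> \<in> space M \<Longrightarrow> centered_gaussian_vector (Pst \<omega>) Pi (Zst \<omega>) (Chat \<omega>)"
    and \<delta>: "0 \<le> \<delta>" "\<delta> \<le> 1"
    and B: "\<exists>E \<in> sets M. measure M E \<ge> 1 - \<delta> \<and>
              (\<forall>\<omega>\<in>E. \<forall>I. rectangle_family Pi I \<longrightarrow>
                 \<bar>prob_rect (Pst \<omega>) Pi (Zst \<omega>) I - prob_rect N Pi Z I\<bar> \<le> r)"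
    and \<alpha>: "0 < \<alpha>" "\<alpha> < 1" "r < \<alpha>" "\<alpha> + 2 * r < 1"
    and \<beta>: "0 < \<beta>" "\<beta> < 1"
    and pihat: "\<And>\<omega>. \<omega> \<in> space M \<Longrightarrow> pihat \<omega> \<in> Pi"
    and pihat_max: "\<And>\<omega>. \<omega> \<in> space M \<Longrightarrow>
        (let qhat = quantile (Pst \<omega>) (\<lambda>y. Max ((Zst \<omega> y) ` Pi)) (1 - \<alpha>);
             LV = (\<lambda>p. Vhat \<omega> p - qhat * shat \<omega> p)
         in LV (pihat \<omega>) = Max (LV ` Pi))"
  shows
    "let Vmax = Max (V ` Pi);
         Pi0 = {p \<in> Pi. V p = Vmax};
         r' = 2 * r + \<delta>;
         qhat = (\<lambda>\<omega>. quantile (Pst \<omega>) (\<lambda>y. Max ((Zst \<omega> y) ` Pi)) (1 - \<alpha>));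
         LV = (\<lambda>\<omega> p. Vhat \<omega> p - qhat \<omega> * shat \<omega> p);
         LVmax = (\<lambda>\<omega>. Max (LV \<omega> ` Pi));
         sigma0 = (\<lambda>\<omega>. sqrt (real n) * Min ((shat \<omega>) ` Pi0));
         q = (\<lambda>\<tau> K. quantile N (\<lambda>x. Max ((Z x) ` K)) \<tau>)
     in (\<exists>E \<in> sets M. measure M E \<ge> 1 - \<alpha> - r' \<and>
           (\<forall>\<omega>\<in>E. Vmax \<ge> V (pihat \<omega>) \<and> V (pihat \<omega>) \<ge> LVmax \<omega>))
      \<and> (\<exists>E \<in> sets M. measure M E \<ge> 1 - \<alpha> - \<beta> - r - r' \<and>
           (\<forall>\<omega>\<in>E. Vmax - V (pihat \<omega>) \<le> Vmax - LVmax \<omega> \<and>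
                   Vmax - LVmax \<omega> \<le> sigma0 \<omega> / sqrt (real n) * (q (1 - \<beta>) Pi0 + q (1 - \<alpha> + r) Pi)))"
  proof -
  interpret Mp: prob_space M by (rule M)
  have Nps: "prob_space N" using Z(1) unfolding centered_gaussian_vector_def by blast
  interpret Np: prob_space N by (rule Nps)
  have Zm: "\<And>p. p \<in> Pi \<Longrightarrow> (\<lambda>x. Z x p) \<in> borel_measurable N"
    using Z(1) unfolding centered_gaussian_vector_def by blast
  define Vmax where "Vmax = Max (V ` Pi)"
  define Pi0 where "Pi0 = {p \<in> Pi. V p = Vmax}"
  define qh where "qh = (\<lambda>\<omega>. quantile (Pst \<omega>) (\<lambda>y. Max ((Zst \<omega> y) ` Pi)) (1 - \<alpha>))"
  define LV where "LV = (\<lambda>\<omega> p. Vhat \<omega> p - qh \<omega> * shat \<omega> p)"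
  define LVmax where "LVmax = (\<lambda>\<omega>. Max (LV \<omega> ` Pi))"
  define sigma0 where "sigma0 = (\<lambda>\<omega>. sqrt (real n) * Min ((shat \<omega>) ` Pi0))"
  define q where "q = (\<lambda>\<tau> K. quantile N (\<lambda>x. Max ((Z x) ` K)) \<tau>)"
  define Zh where "Zh = (\<lambda>\<omega> p. (Vhat \<omega> p - V p) / shat \<omega> p)"
  define c where "c = q (1 - \<alpha> - r) Pi"
  define q1 where "q1 = q (1 - \<beta>) Pi0"
  define q2 where "q2 = q (1 - \<alpha> + r) Pi"
  have Pi0: "finite Pi0" "Pi0 \<noteq> {}" "Pi0 \<subseteq> Pi"
  proof -
    show "Pi0 \<subseteq> Pi" unfolding Pi0_def by auto
    then show "finite Pi0" using Pi(1) by (rule finite_subset)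
    have "Vmax \<in> V ` Pi" unfolding Vmax_def using Pi by (intro Max_in) auto
    then show "Pi0 \<noteq> {}" unfolding Pi0_def by auto
  qed
  have maxmeas: "(\<lambda>x. Max (Z x ` K)) \<in> borel_measurable N" if "K \<subseteq> Pi" "finite K" for K
    using borel_measurable_Max[OF that(2), of "\<lambda>i x. Z x i" N] Zm that(1) by auto
  have qprops: "\<tau> \<le> measure N {y\<in>space N. \<forall>p\<in>K. Z y p \<in> {..q \<tau> K}} \<and>
      (\<forall>x. \<tau> \<le> measure N {y\<in>space N. \<forall>p\<in>K. Z y p \<in> {..x}} \<longrightarrow> q \<tau> K \<le> x)"
    if K: "K \<subseteq> Pi" "K \<noteq> {}" and \<tau>: "0 < \<tau>" "\<tau> < 1" for \<tau> K
  proof -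
    have fK: "finite K" using K(1) Pi(1) by (rule finite_subset)
    note qp = Np.quantile_props[OF maxmeas[OF K(1) fK] \<tau>]
    have e: "\<And>x. {y\<in>space N. Max (Z y ` K) \<le> x} = {y\<in>space N. \<forall>p\<in>K. Z y p \<in> {..x}}"
      by (rule Max_le_rect[OF fK K(2)])
    show ?thesis using qp unfolding e q_def by auto
  qed
  have lv1: "0 < 1 - \<alpha> - r" "1 - \<alpha> - r < 1" using \<alpha> r by auto
  have lv2: "0 < 1 - \<alpha> + r" "1 - \<alpha> + r < 1" using \<alpha> r by auto
  have lv3: "0 < 1 - \<beta>" "1 - \<beta> < 1" using \<beta> by auto
  have Fc: "1 - \<alpha> - r \<le> measure N {y\<in>space N. \<forall>p\<in>Pi. Z y p \<in> {..c}}"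
    and cmin: "\<And>x. 1 - \<alpha> - r \<le> measure N {y\<in>space N. \<forall>p\<in>Pi. Z y p \<in> {..x}} \<Longrightarrow> c \<le> x"
    using qprops[OF subset_refl Pi(2) lv1] unfolding c_def by auto
  have Fq2: "1 - \<alpha> + r \<le> measure N {y\<in>space N. \<forall>p\<in>Pi. Z y p \<in> {..q2}}"
    using qprops[OF subset_refl Pi(2) lv2] unfolding q2_def by auto
  have Fq1: "1 - \<beta> \<le> measure N {y\<in>space N. \<forall>p\<in>Pi0. Z y p \<in> {..q1}}"
    using qprops[OF Pi0(3) Pi0(2) lv3] unfolding q1_def by auto
  obtain EB where EB: "EB \<in> sets M" "1 - \<delta> \<le> measure M EB"
    and EBr: "\<And>\<omega> I. \<omega> \<in> EB \<Longrightarrow> rectangle_family Pi I \<Longrightarrow>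
                 \<bar>prob_rect (Pst \<omega>) Pi (Zst \<omega>) I - prob_rect N Pi Z I\<bar> \<le> r"
    using B by blast
  have qhb: "c \<le> qh \<omega> \<and> qh \<omega> \<le> q2" if \<omega>: "\<omega> \<in> EB" for \<omega>
  proof -
    let ?P = "Pst \<omega>"
    let ?S = "{x. 1 - \<alpha> \<le> measure ?P {y \<in> space ?P. Max (Zst \<omega> y ` Pi) \<le> x}}"
    have hB: "\<bar>measure ?P {y\<in>space ?P. Max (Zst \<omega> y ` Pi) \<le> x} - measure N {y\<in>space N. \<forall>p\<in>Pi. Z y p \<in> {..x}}\<bar> \<le> r" for x
    proof -
      have "rectangle_family Pi (\<lambda>_. {..x})" unfolding rectangle_family_def by simp
      from EBr[OF \<omega> this] show ?thesis
        unfolding prob_rect_def Max_le_rect[OF Pi] .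
    qed
    have q2S: "q2 \<in> ?S"
      using hB[of q2] Fq2 unfolding abs_le_iff by auto
    have lb: "c \<le> x" if "x \<in> ?S" for x
    proof (rule cmin)
      show "1 - \<alpha> - r \<le> measure N {y\<in>space N. \<forall>p\<in>Pi. Z y p \<in> {..x}}"
        using hB[of x] that unfolding abs_le_iff by auto
    qed
    have bdd: "bdd_below ?S" using lb by (rule bdd_belowI)
    have "qh \<omega> = Inf ?S" unfolding qh_def quantile_def ..
    moreover have "c \<le> Inf ?S" using q2S lb by (intro cInf_greatest) auto
    moreover have "Inf ?S \<le> q2" using q2S bdd by (intro cInf_lower)
    ultimately show ?thesis by simp
  qed
  have Zhm: "(\<lambda>\<omega>. Zh \<omega> p) \<in> borel_measurable M" if p: "p \<in> Pi" for p
  proof -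
    note [measurable] = Vhat_meas[OF p] shat_meas[OF p]
    show ?thesis unfolding Zh_def by measurable
  qed
  have Gr: "measure N {y\<in>space N. \<forall>p\<in>Pi. Z y p \<in> I p} - r \<le> measure M {\<omega>\<in>space M. \<forall>p\<in>Pi. Zh \<omega> p \<in> I p}"
    if "rectangle_family Pi I" for I
    using G[OF that] unfolding prob_rect_def Zh_def abs_le_iff by linarith
  have rectsets: "{\<omega>\<in>space M. \<forall>p\<in>Pi. Zh \<omega> p \<in> I p} \<in> sets M"
    if "\<And>p. p \<in> Pi \<Longrightarrow> I p \<in> sets borel" for I
  proof (rule sets.sets_Collect_finite_All[OF _ Pi(1)])
    fix p assume p: "p \<in> Pi"
    have "(\<lambda>\<omega>. Zh \<omega> p) -` I p \<inter> space M \<in> sets M"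
      by (rule measurable_sets[OF Zhm[OF p] that[OF p]])
    moreover have "(\<lambda>\<omega>. Zh \<omega> p) -` I p \<inter> space M = {\<omega>\<in>space M. Zh \<omega> p \<in> I p}" by auto
    ultimately show "{\<omega>\<in>space M. Zh \<omega> p \<in> I p} \<in> sets M" by simp
  qed
  have rectsetsN: "{y\<in>space N. \<forall>p\<in>K. Z y p \<in> I p} \<in> sets N"
    if "\<And>p. p \<in> K \<Longrightarrow> I p \<in> sets borel" "K \<subseteq> Pi" for I K
  proof (rule sets.sets_Collect_finite_All[OF _ finite_subset[OF that(2) Pi(1)]])
    fix p assume p: "p \<in> K"
    have "(\<lambda>y. Z y p) -` I p \<inter> space N \<in> sets N"
      using p that by (intro measurable_sets[OF Zm]) auto
    moreover have "(\<lambda>y. Z y p) -` I p \<inter> space N = {y\<in>space N. Z y p \<in> I p}" by auto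
    ultimately show "{y\<in>space N. Z y p \<in> I p} \<in> sets N" by simp
  qed
  have good1: "Vmax \<ge> V (pihat \<omega>) \<and> V (pihat \<omega>) \<ge> LVmax \<omega>"
    if \<omega>: "\<omega> \<in> space M" and le: "\<forall>p\<in>Pi. Zh \<omega> p \<le> qh \<omega>" for \<omega>
  proof
    have ph: "pihat \<omega> \<in> Pi" by (rule pihat[OF \<omega>])
    show "Vmax \<ge> V (pihat \<omega>)" unfolding Vmax_def using Pi(1) ph by simp
    have "Zh \<omega> (pihat \<omega>) \<le> qh \<omega>" using le ph by blast
    then have "Vhat \<omega> (pihat \<omega>) - V (pihat \<omega>) \<le> qh \<omega> * shat \<omega> (pihat \<omega>)"
      using shat_pos[OF \<omega> ph] unfolding Zh_def by (simp add: pos_divide_le_eq)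
    then have "LV \<omega> (pihat \<omega>) \<le> V (pihat \<omega>)" unfolding LV_def by simp
    moreover have "LV \<omega> (pihat \<omega>) = LVmax \<omega>"
      using pihat_max[OF \<omega>] unfolding LV_def LVmax_def qh_def Let_def by simp
    ultimately show "V (pihat \<omega>) \<ge> LVmax \<omega>" by simp
  qed
  define A1 where "A1 = {\<omega>\<in>space M. \<forall>p\<in>Pi. Zh \<omega> p \<in> {..c}}"
  have A1s: "A1 \<in> sets M" unfolding A1_def by (rule rectsets) simp
  have A1m: "1 - \<alpha> - r - r \<le> measure M A1"
    using Gr[of "\<lambda>_. {..c}"] Fc unfolding A1_def rectangle_family_def by simp
  have part1: "\<exists>E \<in> sets M. measure M E \<ge> 1 - \<alpha> - (2 * r + \<delta>) \<and>
           (\<forall>\<omega>\<in>E. Vmax \<ge> V (pihat \<omega>) \<and> V (pihat \<omega>) \<ge> LVmax \<omega>)"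
  proof (intro bexI conjI ballI)
    show "EB \<inter> A1 \<in> sets M" using EB(1) A1s by simp
    show "1 - \<alpha> - (2 * r + \<delta>) \<le> measure M (EB \<inter> A1)"
      using Mp.prob_Int_lb[OF EB(1) A1s] EB(2) A1m by linarith
    fix \<omega> assume \<omega>: "\<omega> \<in> EB \<inter> A1"
    then have \<omega>s: "\<omega> \<in> space M" unfolding A1_def by simp
    have "\<forall>p\<in>Pi. Zh \<omega> p \<le> qh \<omega>" using \<omega> qhb[of \<omega>] unfolding A1_def by force
    from good1[OF \<omega>s this]
    show "Vmax \<ge> V (pihat \<omega>)" "V (pihat \<omega>) \<ge> LVmax \<omega>" by auto
  qed
  define I where "I = (\<lambda>p. if p \<in> Pi0 then {- q1 .. c} else {.. c})"
  have Ir: "rectangle_family Pi I" unfolding rectangle_family_def I_def by simp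
  have Ib: "\<And>p. I p \<in> sets borel" unfolding I_def by simp
  define A where "A = {y\<in>space N. \<forall>p\<in>Pi. Z y p \<in> {..c}}"
  define B0 where "B0 = {y\<in>space N. \<forall>p\<in>Pi0. - Z y p \<le> q1}"
  define R where "R = {y\<in>space N. \<forall>p\<in>Pi. Z y p \<in> I p}"
  have As: "A \<in> sets N" unfolding A_def by (rule rectsetsN) auto
  have Rs: "R \<in> sets N" unfolding R_def by (rule rectsetsN) (auto simp: Ib)
  have B0s: "B0 \<in> sets N"
  proof -
    have "{y\<in>space N. \<forall>p\<in>Pi0. Z y p \<in> {- q1..}} \<in> sets N" by (rule rectsetsN) (auto simp: Pi0(3))
    moreover have "{y\<in>space N. \<forall>p\<in>Pi0. Z y p \<in> {- q1..}} = B0" unfolding B0_def by auto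
    ultimately show ?thesis by simp
  qed
  have sym: "measure N B0 = measure N {y\<in>space N. \<forall>p\<in>Pi0. Z y p \<le> q1}"
  proof -
    have Zm0: "\<And>p. p \<in> Pi0 \<Longrightarrow> (\<lambda>x. Z x p) \<in> borel_measurable N" using Zm Pi0(3) by auto
    have sz: "\<And>t. (\<integral>\<omega>. sin (\<Sum>p\<in>Pi0. t p * Z \<omega> p) \<partial>N) = 0"
      by (rule gauss_sinz[OF Z(1) Pi(1) Pi0(3)])
    have na1: "\<And>p. p \<in> Pi0 \<Longrightarrow> measure N {\<omega>\<in>space N. Z \<omega> p = q1} = 0"
      using gauss_noatom[OF Z(1) Pi(1)] Z(2) Pi0(3) by auto
    have na2: "measure N {\<omega>\<in>space N. - Z \<omega> p = q1} = 0" if "p \<in> Pi0" for p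
    proof -
      have "{\<omega>\<in>space N. - Z \<omega> p = q1} = {\<omega>\<in>space N. Z \<omega> p = - q1}" by auto
      then show ?thesis using gauss_noatom[OF Z(1) Pi(1)] Z(2) Pi0(3) that by auto
    qed
    show ?thesis unfolding B0_def using Np.orthant_sym[OF Pi0(1) Zm0 sz na1 na2] by simp
  qed
  have B0m: "1 - \<beta> \<le> measure N B0" using Fq1 sym by simp
  have ABR: "A \<inter> B0 \<subseteq> R"
    unfolding A_def B0_def R_def I_def by auto
  have Rm: "1 - \<alpha> - r - \<beta> \<le> measure N R"
  proof -
    have "measure N (A \<inter> B0) \<le> measure N R" using ABR Rs by (intro Np.finite_measure_mono)
    moreover have "measure N A + measure N B0 - 1 \<le> measure N (A \<inter> B0)" by (rule Np.prob_Int_lb[OF As B0s])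
    moreover have "1 - \<alpha> - r \<le> measure N A" using Fc unfolding A_def .
    ultimately show ?thesis using B0m by linarith
  qed
  define A2 where "A2 = {\<omega>\<in>space M. \<forall>p\<in>Pi. Zh \<omega> p \<in> I p}"
  have A2s: "A2 \<in> sets M" unfolding A2_def by (rule rectsets) (simp add: Ib)
  have A2m: "1 - \<alpha> - r - \<beta> - r \<le> measure M A2"
    using Gr[OF Ir] Rm unfolding A2_def R_def by linarith
  have part2: "\<exists>E \<in> sets M. measure M E \<ge> 1 - \<alpha> - \<beta> - r - (2 * r + \<delta>) \<and>
           (\<forall>\<omega>\<in>E. Vmax - V (pihat \<omega>) \<le> Vmax - LVmax \<omega> \<and>
                   Vmax - LVmax \<omega> \<le> sigma0 \<omega> / sqrt (real n) * (q (1 - \<beta>) Pi0 + q (1 - \<alpha> + r) Pi))"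
  proof (intro bexI conjI ballI)
    show "EB \<inter> A2 \<in> sets M" using EB(1) A2s by simp
    show "1 - \<alpha> - \<beta> - r - (2 * r + \<delta>) \<le> measure M (EB \<inter> A2)"
      using Mp.prob_Int_lb[OF EB(1) A2s] EB(2) A2m r by linarith
    fix \<omega> assume \<omega>: "\<omega> \<in> EB \<inter> A2"
    then have \<omega>s: "\<omega> \<in> space M" unfolding A2_def by simp
    have inI: "\<And>p. p \<in> Pi \<Longrightarrow> Zh \<omega> p \<in> I p" using \<omega> unfolding A2_def by simp
    have qb: "c \<le> qh \<omega>" "qh \<omega> \<le> q2" using qhb[of \<omega>] \<omega> by auto
    have "\<forall>p\<in>Pi. Zh \<omega> p \<le> qh \<omega>"
    proof
      fix p assume "p \<in> Pi"
      then have "Zh \<omega> p \<le> c" using inI[of p] unfolding I_def by (auto split: if_splits)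
      then show "Zh \<omega> p \<le> qh \<omega>" using qb by simp
    qed
    from good1[OF \<omega>s this]
    have g: "Vmax \<ge> V (pihat \<omega>)" "V (pihat \<omega>) \<ge> LVmax \<omega>" by auto
    then show "Vmax - V (pihat \<omega>) \<le> Vmax - LVmax \<omega>" by simp
    have "Min (shat \<omega> ` Pi0) \<in> shat \<omega> ` Pi0" using Pi0 by (intro Min_in) auto
    then obtain p0 where p0: "p0 \<in> Pi0" "shat \<omega> p0 = Min (shat \<omega> ` Pi0)" by auto
    have p0P: "p0 \<in> Pi" using p0(1) Pi0(3) by auto
    have sp: "0 < shat \<omega> p0" by (rule shat_pos[OF \<omega>s p0P])
    have Vp0: "V p0 = Vmax" using p0(1) unfolding Pi0_def by simp
    have lz: "- q1 \<le> Zh \<omega> p0" using inI[OF p0P] p0(1) unfolding I_def by simp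
    have "LV \<omega> p0 \<le> LVmax \<omega>" unfolding LVmax_def using Pi(1) p0P by simp
    moreover have "Vmax - LV \<omega> p0 = shat \<omega> p0 * (qh \<omega> - Zh \<omega> p0)"
      unfolding LV_def Zh_def using sp Vp0 by (simp add: field_simps)
    moreover have "shat \<omega> p0 * (qh \<omega> - Zh \<omega> p0) \<le> shat \<omega> p0 * (q1 + q2)"
      using sp lz qb by (intro mult_left_mono) auto
    moreover have "sigma0 \<omega> / sqrt (real n) = shat \<omega> p0"
      unfolding sigma0_def using n p0(2) by simp
    ultimately show "Vmax - LVmax \<omega> \<le> sigma0 \<omega> / sqrt (real n) * (q (1 - \<beta>) Pi0 + q (1 - \<alpha> + r) Pi)"
      unfolding q1_def q2_def by (simp add: add.commute)
  qed
  show ?thesis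
    using part1 part2
    unfolding Let_def Vmax_def Pi0_def qh_def LV_def LVmax_def sigma0_def q_def
    by blast
qed

end
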